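(* Let $n\ge2$ and let $A=(a_{ij})$ be an $n\times n$ nonnegative irreducible matrix with row sums $r_1\ge r_2\ge\cdots\ge r_n$ (where $r_i=\sum_j a_{ij}$). Let $M=\max_{1\le i\le n}a_{ii}$ and $N=\max_{i\ne j}a_{ij}$, and assume $N>0$. Then for $1\le i\le n$, \[\rho(A)\le \frac{r_i+M-N+\sqrt{(r_i-M+N)^2+4N\sum_{k=1}^{i-1}(r_k-r_i)}}{2}.\] Equality holds if and only if $r_1=\cdots=r_n$, or for some $2\le t\le i$: (i) $a_{kk}=M$ for $1\le k\le t-1$; (ii) $a_{kl}=N$ for all $1\le k\le n$, $1\le l\le t-1$, $k\ne l$; (iii) $r_t=\cdots=r_n$.
   Context: $\rho(A)$ denotes the spectral radius of $A$. An empty sum equals $0$. *)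

theory Defs
  imports "Jordan_Normal_Form.Spectral_Radius"
begin

text \<open>A square matrix of dimension n is reducible if there is a nonempty proper subset I
  of the index set such that a_ij = 0 whenever i in I and j not in I (equivalently, it is
  permutation-similar to a block triangular matrix).
  Indices are 0-based.\<close>

definition reducible_mat :: "nat \<Rightarrow> real mat \<Rightarrow> bool" where
  "reducible_mat n A \<longleftrightarrow>
     (\<exists>I. I \<subseteq> {0..<n} \<and> I \<noteq> {} \<and> I \<noteq> {0..<n} \<and>
          (\<forall>i\<in>I. \<forall>j\<in>{0..<n} - I. A $$ (i, j) = 0))"

definition irreducible_mat :: "nat \<Rightarrow> real mat \<Rightarrow> bool" where
  "irreducible_mat n A \<longleftrightarrow> \<not> reducible_mat n A"

definition row_sum :: "real mat \<Rightarrow> nat \<Rightarrow> real" where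
  "row_sum A i = (\<Sum>j<dim_col A. A $$ (i, j))"

definition rho :: "real mat \<Rightarrow> real" where
  "rho A = spectral_radius (map_mat complex_of_real A)"

end

theory Submission
  imports Defs
begin

lemma eig_core:
  fixes A :: "real mat"
  assumes A: "A \<in> carrier_mat n n" and nn: "\<forall>i<n. \<forall>j<n. A$$(i,j) \<ge> 0"
   and xpos: "\<forall>k<n. x k > 0" and rows: "\<forall>k<n. (\<Sum>j<n. A$$(k,j) * x j) \<le> s * x k"
   and ev: "eigenvector (map_mat complex_of_real A) v l"
  shows "cmod l \<le> s"
    and "irreducible_mat n A \<Longrightarrow> cmod l = s \<Longrightarrow> \<forall>k<n. (\<Sum>j<n. A$$(k,j) * x j) = s * x k"
proof -
  let ?Ac = "map_mat complex_of_real A"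
  have v: "v \<in> carrier_vec n" "v \<noteq> 0\<^sub>v n" "?Ac *\<^sub>v v = l \<cdot>\<^sub>v v"
    using ev A unfolding eigenvector_def by auto
  have evk: "(\<Sum>j<n. complex_of_real (A$$(k,j)) * v$j) = l * v$k" if k: "k<n" for k
  proof -
    have "(?Ac *\<^sub>v v) $ k = (l \<cdot>\<^sub>v v) $ k" using v(3) by simp
    thus ?thesis using k A v(1) by (simp add: scalar_prod_def atLeast0LessThan)
  qed
  define w where "w j = cmod (v$j) / x j" for j
  define W where "W = Max (w ` {..<n})"
  obtain j0 where j0: "j0 < n" "v$j0 \<noteq> 0"
  proof -
    have "\<exists>j<n. v$j \<noteq> 0"
    proof (rule ccontr)
      assume "\<not> ?thesis"
      hence "v = 0\<^sub>v n" using v(1) by (intro eq_vecI) auto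
      thus False using v(2) by simp
    qed
    thus ?thesis using that by blast
  qed
  have n0: "n > 0" using j0 by simp
  have Wge: "w j \<le> W" if "j<n" for j using that by (simp add: W_def)
  obtain m where m: "m<n" "w m = W"
  proof -
    have "W \<in> w ` {..<n}" unfolding W_def using n0 by (intro Max_in) auto
    thus ?thesis using that by auto
  qed
  have cv: "cmod (v$j) = x j * w j" if "j<n" for j proof -
    have "x j > 0" using xpos that by blast
    thus ?thesis by (simp add: w_def)
  qed
  have Wpos: "W > 0"
  proof -
    have "w j0 > 0" using j0 xpos by (simp add: w_def)
    thus ?thesis using Wge[OF j0(1)] by simp
  qed
  have key: "cmod l * cmod (v$k) \<le> (\<Sum>j<n. A$$(k,j) * x j * w j)" if k: "k<n" for k
  proof -
    have "cmod l * cmod (v$k) = cmod (\<Sum>j<n. complex_of_real (A$$(k,j)) * v$j)"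
      using evk[OF k] by (simp add: norm_mult)
    also have "\<dots> \<le> (\<Sum>j<n. cmod (complex_of_real (A$$(k,j)) * v$j))" by (rule norm_sum)
    also have "\<dots> = (\<Sum>j<n. A$$(k,j) * x j * w j)"
      using nn k cv by (intro sum.cong) (auto simp: norm_mult)
    finally show ?thesis .
  qed
  have key2: "(\<Sum>j<n. A$$(k,j) * x j * w j) \<le> W * (\<Sum>j<n. A$$(k,j) * x j)" if k: "k<n" for k
  proof -
    have "(\<Sum>j<n. A$$(k,j) * x j * w j) \<le> (\<Sum>j<n. W * (A$$(k,j) * x j))"
      proof (intro sum_mono)
      fix j assume j: "j \<in> {..<n}"
      have "A$$(k,j) * x j \<ge> 0" using nn k xpos j by (simp add: less_imp_le)
      thus "A$$(k,j) * x j * w j \<le> W * (A$$(k,j) * x j)" using Wge[of j] j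
        by (simp add: mult_right_mono mult.commute)
    qed
    thus ?thesis by (simp add: sum_distrib_left)
  qed
  have chain: "cmod l * (x k * W) \<le> W * (s * x k)" if k: "k<n" "w k = W" for k
  proof -
    have "cmod l * (x k * W) \<le> W * (\<Sum>j<n. A$$(k,j) * x j)"
      using key[OF k(1)] key2[OF k(1)] cv[OF k(1)] k(2) by simp
    also have "\<dots> \<le> W * (s * x k)" using rows k Wpos by (simp add: mult_left_mono)
    finally show ?thesis .
  qed
  show "cmod l \<le> s"
  proof -
    have "cmod l * (x m * W) \<le> s * (x m * W)" using chain[OF m] by (simp add: ac_simps)
    moreover have "x m * W > 0" using xpos m Wpos by simp
    ultimately show ?thesis using mult_le_cancel_right_pos by blast
  qed
  assume irr: "irreducible_mat n A" and eq: "cmod l = s"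
  define K where "K = {k. k<n \<and> w k = W}"
  have zero: "A$$(k,j) = 0" if k: "k \<in> K" and j: "j<n" "j \<notin> K" for k j
  proof -
    have kn: "k<n" "w k = W" using k by (auto simp: K_def)
    have "s * (x k * W) \<le> (\<Sum>j<n. A$$(k,j) * x j * w j)"
      using key[OF kn(1)] cv[OF kn(1)] kn(2) eq by simp
    moreover have "W * (\<Sum>j<n. A$$(k,j) * x j) \<le> W * (s * x k)" using rows kn Wpos by (simp add: mult_left_mono)
    ultimately have "W * (\<Sum>j<n. A$$(k,j) * x j) \<le> (\<Sum>j<n. A$$(k,j) * x j * w j)"
      by (simp add: ac_simps)
    hence "(\<Sum>j<n. A$$(k,j) * x j * (W - w j)) \<le> 0"
      by (simp add: sum_distrib_left algebra_simps sum_subtractf)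
    moreover have "\<forall>j\<in>{..<n}. A$$(k,j) * x j * (W - w j) \<ge> 0"
    proof
      fix j assume j: "j \<in> {..<n}"
      have "A$$(k,j) \<ge> 0" "x j \<ge> 0" "W - w j \<ge> 0" using nn kn xpos Wge[of j] j by (auto simp: less_imp_le)
      thus "A$$(k,j) * x j * (W - w j) \<ge> 0" by simp
    qed
    ultimately have "(\<Sum>j<n. A$$(k,j) * x j * (W - w j)) = 0"
      by (meson order_antisym sum_nonneg)
    hence "\<forall>j\<in>{..<n}. A$$(k,j) * x j * (W - w j) = 0"
      using sum_nonneg_eq_0_iff[of "{..<n}" "\<lambda>j. A$$(k,j) * x j * (W - w j)"] \<open>\<forall>j\<in>{..<n}. A$$(k,j) * x j * (W - w j) \<ge> 0\<close>
      by blast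
    hence "A$$(k,j) * x j * (W - w j) = 0" using j by auto
    moreover have "W - w j \<noteq> 0" using j by (auto simp: K_def)
    moreover have "x j \<noteq> 0" using xpos j by force
    ultimately show ?thesis by simp
  qed
  have Kall: "K = {0..<n}"
  proof (rule ccontr)
    assume "K \<noteq> {0..<n}"
    moreover have "K \<subseteq> {0..<n}" "K \<noteq> {}" using m by (auto simp: K_def)
    moreover have "\<forall>i\<in>K. \<forall>j\<in>{0..<n} - K. A $$ (i, j) = 0" using zero by auto
    ultimately have "reducible_mat n A" unfolding reducible_mat_def by (intro exI[of _ K]) simp
    thus False using irr by (simp add: irreducible_mat_def)
  qed
  show "\<forall>k<n. (\<Sum>j<n. A$$(k,j) * x j) = s * x k"
  proof (intro allI impI)
    fix k assume k: "k<n"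
    have "k \<in> K" using Kall k by simp
    hence kK: "w k = W" unfolding K_def by blast
    have "s * (x k * W) \<le> W * (\<Sum>j<n. A$$(k,j) * x j)"
    proof -
      have "s * (x k * W) = cmod l * cmod (v$k)" using cv[OF k] kK eq by simp
      thus ?thesis using key[OF k] key2[OF k] by linarith
    qed
    moreover have "W * (\<Sum>j<n. A$$(k,j) * x j) \<le> W * (s * x k)" using rows k Wpos by (simp add: mult_left_mono)
    moreover have "s * (x k * W) = W * (s * x k)" by (simp add: algebra_simps)
    ultimately have "W * (\<Sum>j<n. A$$(k,j) * x j) = W * (s * x k)" by linarith
    thus "(\<Sum>j<n. A$$(k,j) * x j) = s * x k" using Wpos by simp
  qed
qed

theorem corollary1:
  fixes A :: "real mat" and n :: nat
  assumes "n \<ge> 2"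
    and "A \<in> carrier_mat n n"
    and "\<forall>i<n. \<forall>j<n. A $$ (i, j) \<ge> 0"
    and "irreducible_mat n A"
    and "\<forall>k l. k \<le> l \<and> l < n \<longrightarrow> row_sum A l \<le> row_sum A k"
    and "M = Max {A $$ (k, k) | k. k < n}"
    and "N = Max {A $$ (k, l) | k l. k < n \<and> l < n \<and> k \<noteq> l}"
    and "N > 0"
    and "i < n"
  shows "rho A \<le> (row_sum A i + M - N +
            sqrt ((row_sum A i - M + N)\<^sup>2 + 4 * N * (\<Sum>k<i. row_sum A k - row_sum A i))) / 2
   \<and> (rho A = (row_sum A i + M - N +
            sqrt ((row_sum A i - M + N)\<^sup>2 + 4 * N * (\<Sum>k<i. row_sum A k - row_sum A i))) / 2
      \<longleftrightarrow> (\<forall>k<n. row_sum A k = row_sum A 0)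
          \<or> (\<exists>t. 1 \<le> t \<and> t \<le> i \<and>
               (\<forall>k<t. A $$ (k, k) = M) \<and>
               (\<forall>k<n. \<forall>l<t. k \<noteq> l \<longrightarrow> A $$ (k, l) = N) \<and>
               (\<forall>k. t \<le> k \<and> k < n \<longrightarrow> row_sum A k = row_sum A t)))"
proof -
  note Acar = assms(2) and nn = assms(3) and irr = assms(4) and Npos = assms(8) and i = assms(9)
  define r where "r k = row_sum A k" for k
  have rdef: "r k = (\<Sum>j<n. A$$(k,j))" for k using Acar by (simp add: r_def row_sum_def)
  have rs: "row_sum A = r" by (simp add: r_def fun_eq_iff)
  have rsort: "r l \<le> r k" if "k \<le> l" "l < n" for k l using assms(5) that by (simp add: r_def)
  have n0: "n > 0" using assms(1) by simp
  have Mset: "{A $$ (k, k) | k. k < n} = (\<lambda>k. A$$(k,k)) ` {..<n}" by auto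
  have Mge: "A$$(k,k) \<le> M" if "k<n" for k
    unfolding assms(6) Mset using that by (intro Max_ge) auto
  obtain m where m: "m<n" "M = A$$(m,m)"
  proof -
    have "M \<in> (\<lambda>k. A$$(k,k)) ` {..<n}" unfolding assms(6) Mset using n0 by (intro Max_in) auto
    thus ?thesis using that by auto
  qed
  have Nfin: "finite {A $$ (k, l) | k l. k < n \<and> l < n \<and> k \<noteq> l}"
    by (rule finite_subset[of _ "(\<lambda>(k,l). A$$(k,l)) ` ({..<n}\<times>{..<n})"]) auto
  have Nge: "A$$(k,l) \<le> N" if "k<n" "l<n" "k\<noteq>l" for k l
    unfolding assms(7) using that by (intro Max_ge[OF Nfin]) auto
  have rnn: "r k \<ge> 0" if "k<n" for k unfolding rdef by (intro sum_nonneg) (use nn that in auto)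
  have rM: "M \<le> r 0"
  proof -
    have "A$$(m,m) \<le> r m" unfolding rdef using m nn by (intro member_le_sum) auto
    also have "\<dots> \<le> r 0" using rsort m by simp
    finally show ?thesis using m by simp
  qed
  define D where "D = (\<Sum>k<i. r k - r i)"
  have Dnn: "D \<ge> 0" unfolding D_def using rsort i by (intro sum_nonneg) auto
  define q where "q = sqrt ((r i - M + N)^2 + 4*N*D)"
  define s where "s = (r i + M - N + q)/2"
  define d where "d = s - M + N"
  have ND: "0 \<le> 4*N*D" using Dnn Npos by simp
  have argnn: "0 \<le> (r i - M + N)^2 + 4*N*D"
  proof -
    have "0 \<le> N * D" using Dnn Npos by simp
    moreover have "0 \<le> (r i - M + N)^2" by simp
    ultimately show ?thesis by linarith
  qed
  have q2: "q^2 = (r i - M + N)^2 + 4*N*D" unfolding q_def by (rule real_sqrt_pow2[OF argnn])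
  have qnn: "q \<ge> 0" unfolding q_def using argnn by simp
  have qge: "q \<ge> \<bar>r i - M + N\<bar>"
  proof -
    have "sqrt ((r i - M + N)^2) \<le> q" unfolding q_def using ND
      by (intro real_sqrt_le_mono) linarith
    thus ?thesis by simp
  qed
  have D0: "r k = r i" if "D = 0" "k < i" for k
  proof -
    have "\<forall>k\<in>{..<i}. r k - r i = 0"
      using that(1) sum_nonneg_eq_0_iff[of "{..<i}" "\<lambda>k. r k - r i"] rsort i unfolding D_def by auto
    thus ?thesis using that by auto
  qed
  have qge1: "q \<ge> r i - M + N" "q \<ge> -(r i - M + N)" using qge by linarith+
  have dq: "d = (r i - M + N + q)/2" by (simp add: d_def s_def field_simps)
  have dpos: "d > 0"
  proof (cases "D = 0")
    case True
    have "r i = r 0" using D0[OF True, of 0] by (cases "i = 0") auto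
    hence "r i - M + N > 0" using rM Npos by simp
    hence "0 < r i - M + N + q" using qge1 by linarith
    thus ?thesis unfolding dq by simp
  next
    case False
    hence "q^2 > (r i - M + N)^2" using q2 Dnn Npos by simp
    hence "q > \<bar>r i - M + N\<bar>" using qnn
      by (metis abs_ge_zero abs_of_nonneg power2_abs power_mono not_less)
    hence "0 < r i - M + N + q" by linarith
    thus ?thesis unfolding dq by simp
  qed
  have ident: "(s - r i) * d = N * D"
  proof -
    have "(s - r i) * d = (q^2 - (r i - M + N)^2)/4"
      unfolding d_def s_def by (simp add: field_simps power2_eq_square)
    thus ?thesis using q2 by simp
  qed
  define e where "e k = (if k < i then (r k - r i)/d else 0)" for k
  define x where "x k = 1 + e k" for k
  have enn: "e k \<ge> 0" for k using rsort i dpos by (simp add: e_def)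
  have epos: "e k > 0 \<longleftrightarrow> k < i \<and> r k > r i" for k using dpos by (simp add: e_def zero_less_divide_iff)
  have xpos: "\<forall>k<n. x k > 0" using enn by (simp add: x_def add_pos_nonneg)
  have Se: "(\<Sum>k<n. e k) = D/d"
  proof -
    have "(\<Sum>k<n. e k) = (\<Sum>k<i. e k)"
      by (rule sum.mono_neutral_right) (use i in \<open>auto simp: e_def\<close>)
    also have "\<dots> = (\<Sum>k<i. (r k - r i)/d)" by (simp add: e_def)
    also have "\<dots> = D/d" by (simp add: D_def sum_divide_distrib)
    finally show ?thesis .
  qed
  have NS: "N * (\<Sum>k<n. e k) = s - r i"
  proof -
    have "N * (\<Sum>k<n. e k) = (N * D) / d" by (simp add: Se)
    also have "\<dots> = (s - r i) * d / d" by (simp add: ident)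
    also have "\<dots> = s - r i" using dpos by simp
    finally show ?thesis .
  qed
  have rowexp: "(\<Sum>j<n. A$$(k,j) * x j) = r k + (\<Sum>j<n. A$$(k,j) * e j)" for k
    by (simp add: x_def distrib_left sum.distrib rdef)
  define c where "c (k::nat) (j::nat) = (if j = k then M else N)" for k j
  have ce: "(\<Sum>j<n. c k j * e j) = N * (\<Sum>j<n. e j) + (M - N) * e k" if k: "k<n" for k
  proof -
    have "(\<Sum>j<n. c k j * e j) = (\<Sum>j<n. N * e j + (if j = k then (M - N) * e j else 0))"
      by (intro sum.cong) (auto simp: c_def algebra_simps)
    also have "\<dots> = N * (\<Sum>j<n. e j) + (M - N) * e k"
      using k by (simp add: sum.distrib sum_distrib_left)
    finally show ?thesis .
  qed
  have ale: "A$$(k,j) * e j \<le> c k j * e j" if "k<n" "j<n" for k j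
    using Mge Nge that enn by (auto simp: c_def intro!: mult_right_mono)
  have rk: "r k - r i \<le> d * e k" if "k<n" for k
    using dpos rsort[of i k] that by (cases "k < i") (auto simp: e_def)
  have key: "(\<Sum>j<n. A$$(k,j) * x j) \<le> s * x k \<and>
     ((\<Sum>j<n. A$$(k,j) * x j) = s * x k \<longleftrightarrow>
       (\<forall>j<n. e j > 0 \<longrightarrow> A$$(k,j) = c k j) \<and> r k - r i = d * e k)" if k: "k<n" for k
  proof -
    define P where "P = (\<Sum>j<n. A$$(k,j) * e j)"
    define Q where "Q = (\<Sum>j<n. c k j * e j)"
    have PQ: "P \<le> Q" unfolding P_def Q_def using ale k by (intro sum_mono) auto
    have sx: "s * x k - (r k + Q) = d * e k - (r k - r i)"
      unfolding Q_def ce[OF k] NS by (simp add: x_def d_def algebra_simps)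
    have L: "(\<Sum>j<n. A$$(k,j) * x j) = r k + P" unfolding P_def by (rule rowexp)
    have PQeq: "P = Q \<longleftrightarrow> (\<forall>j<n. e j > 0 \<longrightarrow> A$$(k,j) = c k j)"
    proof -
      have "Q - P = (\<Sum>j<n. c k j * e j - A$$(k,j) * e j)" unfolding P_def Q_def by (simp add: sum_subtractf)
      moreover have nnd: "\<forall>j\<in>{..<n}. c k j * e j - A$$(k,j) * e j \<ge> 0" using ale k by auto
      ultimately have "P = Q \<longleftrightarrow> (\<forall>j\<in>{..<n}. c k j * e j - A$$(k,j) * e j = 0)"
        using sum_nonneg_eq_0_iff[of "{..<n}" "\<lambda>j. c k j * e j - A$$(k,j) * e j"] by auto
      also have "\<dots> \<longleftrightarrow> (\<forall>j<n. e j > 0 \<longrightarrow> A$$(k,j) = c k j)"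
      proof -
        have "c k j * e j - A$$(k,j) * e j = 0 \<longleftrightarrow> (e j > 0 \<longrightarrow> A$$(k,j) = c k j)" for j
          using enn[of j] by (auto simp: left_diff_distrib[symmetric])
        thus ?thesis by auto
      qed
      finally show ?thesis .
    qed
    show ?thesis using PQ sx L PQeq rk[OF k] by auto
  qed
  have rowle: "\<forall>k<n. (\<Sum>j<n. A$$(k,j) * x j) \<le> s * x k" using key by blast
  let ?T = "\<forall>k<n. (\<Sum>j<n. A$$(k,j) * x j) = s * x k"
  let ?cond = "(\<forall>k<n. r k = r 0) \<or> (\<exists>t. 1 \<le> t \<and> t \<le> i \<and>
               (\<forall>k<t. A $$ (k, k) = M) \<and>
               (\<forall>k<n. \<forall>l<t. k \<noteq> l \<longrightarrow> A $$ (k, l) = N) \<and>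
               (\<forall>k. t \<le> k \<and> k < n \<longrightarrow> r k = r t))"
  have TT: "?T \<longleftrightarrow> (\<forall>k<n. \<forall>j<n. j < i \<and> r j > r i \<longrightarrow> A$$(k,j) = c k j) \<and> (\<forall>k. i \<le> k \<and> k < n \<longrightarrow> r k = r i)"
  proof -
    have A1: "?T \<longleftrightarrow> (\<forall>k<n. \<forall>j<n. e j > 0 \<longrightarrow> A$$(k,j) = c k j) \<and> (\<forall>k<n. r k - r i = d * e k)"
      using key by blast
    have A2: "(\<forall>k<n. \<forall>j<n. e j > 0 \<longrightarrow> A$$(k,j) = c k j) \<longleftrightarrow> (\<forall>k<n. \<forall>j<n. j < i \<and> r j > r i \<longrightarrow> A$$(k,j) = c k j)"
      by (simp only: epos)
    have A3: "(\<forall>k<n. r k - r i = d * e k) \<longleftrightarrow> (\<forall>k. i \<le> k \<and> k < n \<longrightarrow> r k = r i)"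
    proof -
      have dek: "d * e k = r k - r i" if "k < i" for k using dpos that by (simp add: e_def)
      have ek0: "e k = 0" if "\<not> k < i" for k using that by (simp add: e_def)
      show ?thesis
      proof
        assume H: "\<forall>k<n. r k - r i = d * e k"
        show "\<forall>k. i \<le> k \<and> k < n \<longrightarrow> r k = r i"
        proof (intro allI impI)
          fix k assume k: "i \<le> k \<and> k < n"
          hence "r k - r i = d * e k" using H by blast
          moreover have "e k = 0" using ek0[of k] k by simp
          ultimately show "r k = r i" by simp
        qed
      next
        assume H: "\<forall>k. i \<le> k \<and> k < n \<longrightarrow> r k = r i"
        show "\<forall>k<n. r k - r i = d * e k"
        proof (intro allI impI)
          fix k assume k: "k < n"
          show "r k - r i = d * e k"
          proof (cases "k < i")
            case True thus ?thesis using dek[of k] by simp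
          next
            case False
            hence "r k = r i" using H k not_less by blast
            thus ?thesis using ek0[OF False] by simp
          qed
        qed
      qed
    qed
    show ?thesis unfolding A1 A2 A3 by (rule refl)
  qed
  let ?C1 = "\<forall>k<n. \<forall>j<n. j < i \<and> r j > r i \<longrightarrow> A$$(k,j) = c k j"
  let ?C2 = "\<forall>k. i \<le> k \<and> k < n \<longrightarrow> r k = r i"
  have cond_iff: "?cond \<longleftrightarrow> ?C1 \<and> ?C2"
  proof
    assume H: ?cond
    show "?C1 \<and> ?C2"
      using H
    proof (elim disjE exE conjE)
      assume all: "\<forall>k<n. r k = r 0"
      have ri: "r i = r 0" using all i by blast
      show ?thesis
      proof (intro conjI allI impI)
        fix k j assume "k < n" "j < n" and jj: "j < i \<and> r j > r i"
        have "r j = r 0" using all \<open>j<n\<close> by blast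
        thus "A$$(k,j) = c k j" using jj ri by simp
      next
        fix k assume "i \<le> k \<and> k < n"
        hence "r k = r 0" using all by blast
        thus "r k = r i" using ri by simp
      qed
    next
      fix t assume t1: "1 \<le> t" and t2: "t \<le> i" and H1: "\<forall>k<t. A$$(k,k) = M"
        and H2: "\<forall>k<n. \<forall>l<t. k \<noteq> l \<longrightarrow> A$$(k,l) = N"
        and H3: "\<forall>k. t \<le> k \<and> k < n \<longrightarrow> r k = r t"
      have rti: "r i = r t" using H3 t2 i by blast
      show ?thesis
      proof (intro conjI allI impI)
        fix k j assume k: "k < n" "j < n" and jj: "j < i \<and> r j > r i"
        have jt: "j < t"
        proof (rule ccontr)
          assume "\<not> j < t"
          hence "r j = r t" using H3 k(2) not_less by blast
          thus False using jj rti by simp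
        qed
        show "A$$(k,j) = c k j"
        proof (cases "j = k")
          case True thus ?thesis using H1 jt by (simp add: c_def)
        next
          case False thus ?thesis using H2 jt k(1) by (simp add: c_def)
        qed
      next
        fix k assume "i \<le> k \<and> k < n"
        hence "r k = r t" using H3 t2 le_trans by blast
        thus "r k = r i" using rti by simp
      qed
    qed
  next
    assume H: "?C1 \<and> ?C2"
    hence C1: ?C1 and C2: ?C2 by blast+
    show ?cond
    proof (cases "\<exists>j<i. r j > r i")
      case False
      have rall: "r k = r i" if k: "k < n" for k
      proof (cases "k < i")
        case True
        hence "r i \<le> r k" using rsort i by simp
        moreover have "\<not> r k > r i" using False True by blast
        ultimately show ?thesis by simp
      next
        case False thus ?thesis using C2 k not_less by blast
      qed
      have "\<forall>k<n. r k = r 0"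
      proof (intro allI impI)
        fix k assume "k < n"
        thus "r k = r 0" using rall[of k] rall[of 0] n0 by simp
      qed
      thus ?thesis by blast
    next
      case True
      then obtain j0 where j0: "j0 < i" "r j0 > r i" by blast
      define t where "t = (LEAST t. r t = r i)"
      have rt: "r t = r i" unfolding t_def by (rule LeastI[of "\<lambda>t. r t = r i" i]) simp
      have ti: "t \<le> i" unfolding t_def by (rule Least_le) simp
      have t1: "1 \<le> t"
      proof (rule ccontr)
        assume "\<not> 1 \<le> t"
        hence "t = 0" by simp
        hence "r 0 = r i" using rt by simp
        moreover have "r j0 \<le> r 0" using rsort j0 i by simp
        ultimately show False using j0 by simp
      qed
      have lt: "k < i \<and> r k > r i" if k: "k < t" for k
      proof -
        have "r k \<noteq> r i" using not_less_Least[of k "\<lambda>t. r t = r i"] k unfolding t_def by blast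
        moreover have "k < i" using k ti by simp
        moreover have "r i \<le> r k" using rsort i \<open>k < i\<close> by simp
        ultimately show ?thesis by simp
      qed
      have "1 \<le> t \<and> t \<le> i \<and>
               (\<forall>k<t. A $$ (k, k) = M) \<and>
               (\<forall>k<n. \<forall>l<t. k \<noteq> l \<longrightarrow> A $$ (k, l) = N) \<and>
               (\<forall>k. t \<le> k \<and> k < n \<longrightarrow> r k = r t)"
      proof (intro conjI allI impI)
        show "1 \<le> t" by (rule t1)
        show "t \<le> i" by (rule ti)
      next
        fix k assume k: "k < t"
        hence "k < n" using ti i by simp
        hence "A$$(k,k) = c k k" using C1 lt[OF k] by blast
        thus "A$$(k,k) = M" by (simp add: c_def)
      next
        fix k l assume k: "k < n" and l: "l < t" and kl: "k \<noteq> l"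
        have "l < n" using l ti i by simp
        hence "A$$(k,l) = c k l" using C1 lt[OF l] k by blast
        thus "A$$(k,l) = N" using kl by (simp add: c_def)
      next
        fix k assume k: "t \<le> k \<and> k < n"
        show "r k = r t"
        proof (cases "k < i")
          case True
          have "r k \<le> r t" using rsort k by simp
          moreover have "r i \<le> r k" using rsort True i by simp
          ultimately show ?thesis using rt by simp
        next
          case False
          hence "r k = r i" using C2 k not_less by blast
          thus ?thesis using rt by simp
        qed
      qed
      thus ?thesis by blast
    qed
  qed
  have Tcond: "?T \<longleftrightarrow> ?cond" using TT cond_iff by (rule trans[OF _ sym])
  let ?Ac = "map_mat complex_of_real A"
  have Ac: "?Ac \<in> carrier_mat n n" using Acar by simp
  have "rho A \<in> norm ` spectrum ?Ac" unfolding rho_def by (rule spectral_radius_mem_max(1)[OF Ac n0])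
  then obtain l where l: "eigenvalue ?Ac l" "rho A = cmod l" by (auto simp: spectrum_def)
  then obtain v where v: "eigenvector ?Ac v l" by (auto simp: eigenvalue_def)
  note ec = eig_core[OF Acar nn xpos rowle v]
  have rho_le: "rho A \<le> s" using ec(1) l(2) by simp
  have rho_eq: "rho A = s \<longleftrightarrow> ?T"
  proof
    assume "rho A = s"
    hence "cmod l = s" using l(2) by simp
    thus ?T using ec(2)[OF irr] by blast
  next
    assume T: ?T
    define vx where "vx = vec n (\<lambda>j. complex_of_real (x j))"
    have x0: "x 0 \<noteq> 0" using xpos n0 by force
    have "eigenvector ?Ac vx (complex_of_real s)"
      unfolding eigenvector_def
    proof (intro conjI)
      show "vx \<in> carrier_vec (dim_row ?Ac)" using Acar by (simp add: vx_def)
      show "vx \<noteq> 0\<^sub>v (dim_row ?Ac)"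
      proof
        assume "vx = 0\<^sub>v (dim_row ?Ac)"
        hence "vx $ 0 = 0\<^sub>v n $ 0" using Acar by simp
        thus False using n0 x0 by (simp add: vx_def)
      qed
      show "?Ac *\<^sub>v vx = complex_of_real s \<cdot>\<^sub>v vx"
      proof (rule eq_vecI)
        fix k assume "k < dim_vec (complex_of_real s \<cdot>\<^sub>v vx)"
        hence k: "k < n" by (simp add: vx_def)
        have "(?Ac *\<^sub>v vx) $ k = (\<Sum>j<n. complex_of_real (A$$(k,j)) * complex_of_real (x j))"
          using Acar k by (simp add: vx_def scalar_prod_def atLeast0LessThan)
        also have "\<dots> = complex_of_real (\<Sum>j<n. A$$(k,j) * x j)" by simp
        also have "\<dots> = complex_of_real (s * x k)" using T k by simp
        also have "\<dots> = (complex_of_real s \<cdot>\<^sub>v vx) $ k" using k by (simp add: vx_def)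
        finally show "(?Ac *\<^sub>v vx) $ k = (complex_of_real s \<cdot>\<^sub>v vx) $ k" .
      next
        show "dim_vec (?Ac *\<^sub>v vx) = dim_vec (complex_of_real s \<cdot>\<^sub>v vx)" using Acar by (simp add: vx_def)
      qed
    qed
    hence "eigenvalue ?Ac (complex_of_real s)" unfolding eigenvalue_def by blast
    hence "complex_of_real s \<in> spectrum ?Ac" by (simp add: spectrum_def)
    hence "cmod (complex_of_real s) \<in> norm ` spectrum ?Ac" by (rule imageI)
    hence "cmod (complex_of_real s) \<le> rho A" unfolding rho_def by (rule spectral_radius_mem_max(2)[OF Ac n0])
    hence "s \<le> rho A" by simp
    thus "rho A = s" using rho_le by simp
  qed
  have bnd: "(row_sum A i + M - N +
            sqrt ((row_sum A i - M + N)\<^sup>2 + 4 * N * (\<Sum>k<i. row_sum A k - row_sum A i))) / 2 = s"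
    by (simp add: s_def q_def D_def r_def)
  show ?thesis unfolding bnd unfolding rs
  proof (intro conjI)
    show "rho A \<le> s" by (rule rho_le)
    show "rho A = s \<longleftrightarrow> ?cond" using rho_eq Tcond by (rule trans)
  qed
qed
end
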